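(* Let $G$ be a finite, simple, connected graph on $n$ vertices with $m$ edges, adjacency entries $a_{uv}$ and degrees $d_u$, and let $0=\mathfrak{c}_0<\mathfrak{c}_1\le\dots\le\mathfrak{c}_{n-1}$ be the eigenvalues of its renormalized Laplacian $\hat H=\mathrm{Deg}^{-1/2}(\mathrm{Deg}-A)\mathrm{Deg}^{-1/2}$. Let $k\ge1$ be an integer and let $\mathfrak{M}_0$ be a set of ordered pairs $(u,v)$ of distinct vertices such that $\sum_{(u,v)\in\mathfrak{M}_0}(d_u+d_v)\ge 4(k-1)m$. Then $$\sum_{j=1}^{k-1}\mathfrak{c}_j\le \frac{1}{4m}\sum_{(u,v)\in\mathfrak{M}_0}\big(d_u+d_v+2a_{uv}\big)$$ and $$\sum_{j=1}^{k-1}\mathfrak{c}_j^2\le \frac{1}{4m}\sum_{(u,v)\in\mathfrak{M}_0}\Big(d_u+d_v+4a_{uv}+\sum_{x}\frac{1}{d_x}\Big(a_{xv}\sqrt{\tfrac{d_u}{d_v}}-a_{xu}\sqrt{\tfrac{d_v}{d_u}}\Big)^2\Big),$$ where $x$ ranges over all vertices.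
   Context: $A=(a_{uv})$ is the adjacency matrix ($a_{uv}=1$ if $u,v$ adjacent, else $0$), $\mathrm{Deg}$ the diagonal matrix of degrees; eigenvalues of $\hat H$ are listed with multiplicity in nondecreasing order, indexed from $0$. *)

theory Defs
  imports "Jordan_Normal_Form.Char_Poly" "HOL-Library.Multiset" "HOL-Computational_Algebra.Polynomial"
begin

definition simple_graph :: "nat \<Rightarrow> (nat \<Rightarrow> nat \<Rightarrow> bool) \<Rightarrow> bool" where
  "simple_graph n E \<longleftrightarrow> (\<forall>u v. E u v \<longrightarrow> u < n \<and> v < n) \<and>
     (\<forall>u v. E u v \<longrightarrow> E v u) \<and> (\<forall>u. \<not> E u u)"

definition connected_graph :: "nat \<Rightarrow> (nat \<Rightarrow> nat \<Rightarrow> bool) \<Rightarrow> bool" where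
  "connected_graph n E \<longleftrightarrow> (\<forall>u<n. \<forall>v<n. E\<^sup>*\<^sup>* u v)"

definition adj :: "(nat \<Rightarrow> nat \<Rightarrow> bool) \<Rightarrow> nat \<Rightarrow> nat \<Rightarrow> real" where
  "adj E u v = (if E u v then 1 else 0)"

definition deg :: "nat \<Rightarrow> (nat \<Rightarrow> nat \<Rightarrow> bool) \<Rightarrow> nat \<Rightarrow> nat" where
  "deg n E u = card {v. v < n \<and> E u v}"

definition num_edges :: "nat \<Rightarrow> (nat \<Rightarrow> nat \<Rightarrow> bool) \<Rightarrow> nat" where
  "num_edges n E = card {(u, v). u < v \<and> v < n \<and> E u v}"

definition adj_matrix :: "nat \<Rightarrow> (nat \<Rightarrow> nat \<Rightarrow> bool) \<Rightarrow> real mat" where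
  "adj_matrix n E = mat n n (\<lambda>(i, j). adj E i j)"

definition deg_matrix :: "nat \<Rightarrow> (nat \<Rightarrow> nat \<Rightarrow> bool) \<Rightarrow> real mat" where
  "deg_matrix n E = mat n n (\<lambda>(i, j). if i = j then real (deg n E i) else 0)"

definition deg_inv_sqrt_matrix :: "nat \<Rightarrow> (nat \<Rightarrow> nat \<Rightarrow> bool) \<Rightarrow> real mat" where
  "deg_inv_sqrt_matrix n E =
     mat n n (\<lambda>(i, j). if i = j then 1 / sqrt (real (deg n E i)) else 0)"

definition renorm_laplacian :: "nat \<Rightarrow> (nat \<Rightarrow> nat \<Rightarrow> bool) \<Rightarrow> real mat" where
  "renorm_laplacian n E =
     deg_inv_sqrt_matrix n E * (deg_matrix n E - adj_matrix n E) * deg_inv_sqrt_matrix n E"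

definition eigenvalues_sorted :: "real mat \<Rightarrow> real list" where
  "eigenvalues_sorted M = sorted_list_of_multiset (proots (char_poly M))"

end

theory Submission
  imports Defs "Jordan_Normal_Form.Schur_Decomposition"
    "HOL-Computational_Algebra.Fundamental_Theorem_Algebra" "HOL-Combinatorics.List_Permutation"
begin


lemma conj_real_vec[simp]: "conjugate (v :: real vec) = v"
  by (rule eq_vecI, auto)

lemma onb_ext:
  fixes v :: "nat \<Rightarrow> real"
  assumes v1: "(\<Sum>u<n. v u * v u) = 1"
  shows "\<exists>w. (\<forall>u<n. w 0 u = v u) \<and>
     (\<forall>i<n. \<forall>j<n. (\<Sum>u<n. w i u * w j u) = (if i = j then 1 else 0)) \<and>
     (\<forall>u<n. \<forall>u'<n. (\<Sum>i<n. w i u * w i u') = (if u = u' then 1 else 0))"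
proof -
  define vv where "vv = vec n v"
  have vv: "vv \<in> carrier_vec n" unfolding vv_def by auto
  have n0: "n \<noteq> 0" using v1 by (cases n, auto)
  have vv0: "vv \<noteq> 0\<^sub>v n"
  proof
    assume "vv = 0\<^sub>v n"
    hence "\<forall>u<n. v u = 0" unfolding vv_def by (metis index_vec index_zero_vec(1))
    hence "(\<Sum>u<n. v u * v u) = 0" by simp
    with v1 show False by simp
  qed
  interpret cof_vec_space n "TYPE(real)" .
  define b where "b = basis_completion vv"
  from basis_completion[OF vv vv0, folded b_def]
  have span_b: "span (set b) = carrier_vec n" and dist_b: "distinct b" 
    and indep: "\<not> lin_dep (set b)" and b: "set b \<subseteq> carrier_vec n" and hdb: "hd b = vv" 
    and len_b: "length b = n" by auto
  from hdb len_b n0 obtain vs where bv: "b = vv # vs" by (cases b, auto)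
  define ws where "ws = gram_schmidt n b"
  from gram_schmidt_result[OF b dist_b indep refl, folded ws_def]
  have ws: "set ws \<subseteq> carrier_vec n" "corthogonal ws" "length ws = n" 
    by (auto simp: len_b)
  from gram_schmidt_hd[OF vv, of vs, folded bv] have hdws: "hd ws = vv" unfolding ws_def .
  have ws0: "ws ! 0 = vv" using hdws ws(3) n0 by (cases ws, auto)
  have wsc: "i < n \<Longrightarrow> ws ! i \<in> carrier_vec n" for i using ws by auto
  define nr where "nr i = sqrt (ws ! i \<bullet> ws ! i)" for i
  have dot_eq: "ws ! i \<bullet> ws ! j = (\<Sum>u<n. ws ! i $ u * ws ! j $ u)" if "i < n" "j < n" for i j
    using wsc[OF that(2)] unfolding scalar_prod_def by (auto simp: lessThan_atLeast0)
  have orth: "i < n \<Longrightarrow> j < n \<Longrightarrow> (ws ! i \<bullet> ws ! j = 0) = (i \<noteq> j)" for i j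
    using corthogonalD[OF ws(2), of i j] ws(3) by simp
  have pos: "i < n \<Longrightarrow> ws ! i \<bullet> ws ! i > 0" for i
  proof -
    assume i: "i < n"
    have "ws ! i \<bullet> ws ! i \<ge> 0" unfolding dot_eq[OF i i] by (intro sum_nonneg, auto)
    moreover have "ws ! i \<bullet> ws ! i \<noteq> 0" using orth[OF i i] by simp
    ultimately show ?thesis by simp
  qed
  define w where "w i u = ws ! i $ u / nr i" for i u
  have nr0: "nr 0 = 1" unfolding nr_def using dot_eq[of 0 0] n0 v1 ws0 unfolding vv_def by simp
  have w0: "\<forall>u<n. w 0 u = v u" unfolding w_def nr0 ws0 vv_def by simp
  have on: "\<forall>i<n. \<forall>j<n. (\<Sum>u<n. w i u * w j u) = (if i = j then 1 else 0)"
  proof (intro allI impI)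
    fix i j assume i: "i < n" and j: "j < n"
    have "(\<Sum>u<n. w i u * w j u) = (ws ! i \<bullet> ws ! j) / (nr i * nr j)"
      unfolding dot_eq[OF i j] w_def sum_divide_distrib by (rule sum.cong, auto)
    also have "\<dots> = (if i = j then 1 else 0)"
    proof (cases "i = j")
      case True
      have "nr i * nr i = ws ! i \<bullet> ws ! i" unfolding nr_def using pos[OF i] by simp
      then show ?thesis using True pos[OF i] by simp
    next
      case False
      then show ?thesis using orth[OF i j] by simp
    qed
    finally show "(\<Sum>u<n. w i u * w j u) = (if i = j then 1 else 0)" .
  qed
  define W where "W = mat n n (\<lambda>(u, i). w i u)"
  have W: "W \<in> carrier_mat n n" "transpose_mat W \<in> carrier_mat n n" unfolding W_def by auto
  have "transpose_mat W * W = 1\<^sub>m n"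
    by (rule eq_matI, insert on, auto simp: W_def scalar_prod_def lessThan_atLeast0)
  from mat_mult_left_right_inverse[OF W(2) W(1) this]
  have WW: "W * transpose_mat W = 1\<^sub>m n" .
  have comp: "\<forall>u<n. \<forall>u'<n. (\<Sum>i<n. w i u * w i u') = (if u = u' then 1 else 0)"
  proof (intro allI impI)
    fix u u' assume u: "u < n" and u': "u' < n"
    have "(W * transpose_mat W) $$ (u, u') = (\<Sum>i<n. w i u * w i u')"
      using u u' by (auto simp: W_def scalar_prod_def lessThan_atLeast0)
    then show "(\<Sum>i<n. w i u * w i u') = (if u = u' then 1 else 0)"
      unfolding WW using u u' by simp
  qed
  show ?thesis using w0 on comp by blast
qed


lemma sym_form:
  fixes h :: "nat \<Rightarrow> nat \<Rightarrow> real"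
  assumes sym: "\<forall>u<n. \<forall>v<n. h u v = h v u"
  shows "(\<Sum>u<n. y u * (\<Sum>w<n. h u w * x w)) = (\<Sum>u<n. x u * (\<Sum>w<n. h u w * y w))"
proof -
  have "(\<Sum>u<n. y u * (\<Sum>w<n. h u w * x w)) = (\<Sum>u<n. \<Sum>w<n. y u * h u w * x w)"
    by (simp add: sum_distrib_left mult.assoc)
  also have "\<dots> = (\<Sum>w<n. \<Sum>u<n. y u * h u w * x w)" by (rule sum.swap)
  also have "\<dots> = (\<Sum>w<n. \<Sum>u<n. x w * h w u * y u)"
    by (intro sum.cong refl, insert sym, auto)
  also have "\<dots> = (\<Sum>u<n. x u * (\<Sum>w<n. h u w * y w))"
    by (simp add: sum_distrib_left mult.assoc)
  finally show ?thesis .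
qed

lemma exists_eig:
  fixes h :: "nat \<Rightarrow> nat \<Rightarrow> real"
  assumes sym: "\<forall>u<n. \<forall>v<n. h u v = h v u" and n: "n \<ge> 1"
  shows "\<exists>v lam. (\<Sum>u<n. v u * v u) = 1 \<and> (\<forall>u<n. (\<Sum>w<n. h u w * v w) = lam * v u)"
proof -
  define Ac where "Ac = mat n n (\<lambda>(i, j). complex_of_real (h i j))"
  have Ac: "Ac \<in> carrier_mat n n" unfolding Ac_def by auto
  from degree_monic_char_poly[OF Ac] n have "degree (char_poly Ac) \<noteq> 0" by auto
  hence "\<not> constant (poly (char_poly Ac))" by (simp add: constant_degree)
  from fundamental_theorem_of_algebra[OF this] obtain z where "poly (char_poly Ac) z = 0" by auto
  hence "eigenvalue Ac z" using eigenvalue_root_char_poly[OF Ac] by simp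
  then obtain vc where ev: "eigenvector Ac vc z" unfolding eigenvalue_def by auto
  hence vc: "vc \<in> carrier_vec n" "vc \<noteq> 0\<^sub>v n" "Ac *\<^sub>v vc = z \<cdot>\<^sub>v vc"
    unfolding eigenvector_def using Ac by auto
  define x where "x u = Re (vc $ u)" for u
  define y where "y u = Im (vc $ u)" for u
  define a where "a = Re z"
  define b where "b = Im z"
  have eqc: "(\<Sum>w<n. complex_of_real (h u w) * vc $ w) = z * vc $ u" if u: "u < n" for u
  proof -
    have "(Ac *\<^sub>v vc) $ u = (\<Sum>w<n. complex_of_real (h u w) * vc $ w)"
      using u vc(1) by (auto simp: Ac_def scalar_prod_def lessThan_atLeast0)
    then show ?thesis using vc(3) u vc(1) by simp
  qed
  have ex: "(\<Sum>w<n. h u w * x w) = a * x u - b * y u" if u: "u < n" for u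
  proof -
    have "Re (\<Sum>w<n. complex_of_real (h u w) * vc $ w) = Re (z * vc $ u)" using eqc[OF u] by simp
    then show ?thesis unfolding x_def y_def a_def b_def by (simp add: Re_sum)
  qed
  have ey: "(\<Sum>w<n. h u w * y w) = b * x u + a * y u" if u: "u < n" for u
  proof -
    have "Im (\<Sum>w<n. complex_of_real (h u w) * vc $ w) = Im (z * vc $ u)" using eqc[OF u] by simp
    then show ?thesis unfolding x_def y_def a_def b_def by (simp add: Im_sum)
  qed
  define X where "X = (\<Sum>u<n. x u * x u)"
  define Y where "Y = (\<Sum>u<n. y u * y u)"
  define XY where "XY = (\<Sum>u<n. x u * y u)"
  have "(\<Sum>u<n. y u * (\<Sum>w<n. h u w * x w)) = (\<Sum>u<n. x u * (\<Sum>w<n. h u w * y w))"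
    by (rule sym_form[OF sym])
  also have "(\<Sum>u<n. y u * (\<Sum>w<n. h u w * x w)) = (\<Sum>u<n. y u * (a * x u - b * y u))"
    by (rule sum.cong, auto simp: ex)
  also have "\<dots> = a * XY - b * Y" unfolding XY_def Y_def
    by (simp add: algebra_simps sum_subtractf sum_distrib_left)
  also have "(\<Sum>u<n. x u * (\<Sum>w<n. h u w * y w)) = (\<Sum>u<n. x u * (b * x u + a * y u))"
    by (rule sum.cong, auto simp: ey)
  also have "\<dots> = b * X + a * XY" unfolding XY_def X_def
    by (simp add: algebra_simps sum.distrib sum_distrib_left)
  finally have bXY: "b * (X + Y) = 0" by (simp add: algebra_simps)
  obtain u0 where u0: "u0 < n" "vc $ u0 \<noteq> 0" using vc(1,2)
    by (metis carrier_vecD eq_vecI index_zero_vec(1) index_zero_vec(2))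
  have X0: "X \<ge> 0" "Y \<ge> 0" unfolding X_def Y_def by (auto intro: sum_nonneg)
  have "x u0 \<noteq> 0 \<or> y u0 \<noteq> 0" using u0(2) unfolding x_def y_def using complex_eqI by force
  hence XY0: "X > 0 \<or> Y > 0"
  proof
    assume "x u0 \<noteq> 0"
    hence "x u0 * x u0 > 0" using not_real_square_gt_zero by blast
    moreover have "x u0 * x u0 \<le> X" unfolding X_def
      by (rule member_le_sum, insert u0, auto)
    ultimately show ?thesis by auto
  next
    assume "y u0 \<noteq> 0"
    hence "y u0 * y u0 > 0" using not_real_square_gt_zero by blast
    moreover have "y u0 * y u0 \<le> Y" unfolding Y_def
      by (rule member_le_sum, insert u0, auto)
    ultimately show ?thesis by auto
  qed
  hence b0: "b = 0" using bXY X0 by auto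
  have gen: "\<exists>v lam. (\<Sum>u<n. v u * v u) = 1 \<and> (\<forall>u<n. (\<Sum>w<n. h u w * v w) = lam * v u)"
    if pos: "(\<Sum>u<n. t u * t u) > 0" and et: "\<forall>u<n. (\<Sum>w<n. h u w * t w) = a * t u" for t
  proof -
    define s where "s = sqrt (\<Sum>u<n. t u * t u)"
    have s: "s > 0" "s * s = (\<Sum>u<n. t u * t u)" unfolding s_def using pos by auto
    define v where "v u = t u / s" for u
    have "(\<Sum>u<n. v u * v u) = (\<Sum>u<n. t u * t u) / (s * s)"
      unfolding v_def sum_divide_distrib by (rule sum.cong, auto)
    also have "\<dots> = 1" using s pos by simp
    finally have 1: "(\<Sum>u<n. v u * v u) = 1" .
    have "\<forall>u<n. (\<Sum>w<n. h u w * v w) = a * v u"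
    proof (intro allI impI)
      fix u assume u: "u < n"
      have "(\<Sum>w<n. h u w * v w) = (\<Sum>w<n. h u w * t w) / s"
        unfolding v_def sum_divide_distrib by (rule sum.cong, auto)
      then show "(\<Sum>w<n. h u w * v w) = a * v u" using et u unfolding v_def by simp
    qed
    with 1 show ?thesis by blast
  qed
  from XY0 show ?thesis
  proof
    assume "X > 0" thus ?thesis using gen[of x] ex b0 unfolding X_def by auto
  next
    assume "Y > 0" thus ?thesis using gen[of y] ey b0 unfolding Y_def by auto
  qed
qed


lemma expand:
  fixes w :: "nat \<Rightarrow> nat \<Rightarrow> real"
  assumes comp: "\<forall>u<N. \<forall>u'<N. (\<Sum>l<N. w l u * w l u') = (if u = u' then 1 else 0)"
    and u: "u < N"
  shows "z u = (\<Sum>l<N. (\<Sum>u'<N. w l u' * z u') * w l u)"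
proof -
  have "(\<Sum>l<N. (\<Sum>u'<N. w l u' * z u') * w l u) = (\<Sum>l<N. \<Sum>u'<N. z u' * (w l u' * w l u))"
    by (intro sum.cong refl, simp add: sum_distrib_left sum_distrib_right mult_ac)
  also have "\<dots> = (\<Sum>u'<N. \<Sum>l<N. z u' * (w l u' * w l u))" by (rule sum.swap)
  also have "\<dots> = (\<Sum>u'<N. z u' * (if u' = u then 1 else 0))"
    by (intro sum.cong refl, insert comp u, auto simp: sum_distrib_left[symmetric])
  also have "\<dots> = z u" using u by (simp add: if_distrib cong: if_cong)
  finally show ?thesis by simp
qed

lemma double_orth:
  fixes w :: "nat \<Rightarrow> nat \<Rightarrow> real"
  assumes on: "\<forall>i<N. \<forall>j<N. (\<Sum>u<N. w i u * w j u) = (if i = j then 1 else 0)"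
    and mN: "m < N"
  shows "(\<Sum>u<N. (\<Sum>j<m. a j * w (Suc j) u) * (\<Sum>j<m. b j * w (Suc j) u))
      = (\<Sum>j<m. a j * b j)"
proof -
  have "(\<Sum>u<N. (\<Sum>j<m. a j * w (Suc j) u) * (\<Sum>j<m. b j * w (Suc j) u))
     = (\<Sum>u<N. \<Sum>j<m. \<Sum>j'<m. a j * b j' * (w (Suc j) u * w (Suc j') u))"
    by (intro sum.cong refl, simp add: sum_product mult_ac)
  also have "\<dots> = (\<Sum>j<m. \<Sum>j'<m. \<Sum>u<N. a j * b j' * (w (Suc j) u * w (Suc j') u))"
    by (simp add: sum.swap[of _ "{..<N}"])
  also have "\<dots> = (\<Sum>j<m. \<Sum>j'<m. a j * b j' * (if j = j' then 1 else 0))"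
    by (intro sum.cong refl, insert on mN, auto simp: sum_distrib_left[symmetric])
  also have "\<dots> = (\<Sum>j<m. a j * b j)"
    by (simp add: if_distrib cong: if_cong)
  finally show ?thesis .
qed


declare sum.lessThan_Suc[simp del]

lemma spectral:
  fixes h :: "nat \<Rightarrow> nat \<Rightarrow> real"
  assumes "\<forall>u<n. \<forall>v<n. h u v = h v u"
    and "(\<Sum>u<n. v u * v u) = 1" and "\<forall>u<n. (\<Sum>w<n. h u w * v w) = lam * v u"
  shows "\<exists>q mu. (\<forall>u<n. q 0 u = v u) \<and> mu 0 = lam \<and>
     (\<forall>i<n. \<forall>j<n. (\<Sum>u<n. q i u * q j u) = (if i = j then 1 else 0)) \<and>
     (\<forall>i<n. \<forall>u<n. (\<Sum>w<n. h u w * q i w) = mu i * q i u)"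
  using assms
proof (induction n arbitrary: h v lam)
  case 0
  then show ?case by simp
next
  case (Suc m h v lam)
  let ?N = "Suc m"
  note sym = Suc.prems(1) and v1 = Suc.prems(2) and ev = Suc.prems(3)
  show ?case
  proof (cases "m = 0")
    case True
    show ?thesis
      by (rule exI[of _ "\<lambda>i. v"], rule exI[of _ "\<lambda>i. lam"], insert True v1 ev, auto)
  next
    case False
    from onb_ext[OF v1] obtain w where w0: "\<forall>u<?N. w 0 u = v u"
      and on: "\<forall>i<?N. \<forall>j<?N. (\<Sum>u<?N. w i u * w j u) = (if i = j then 1 else 0)"
      and comp: "\<forall>u<?N. \<forall>u'<?N. (\<Sum>i<?N. w i u * w i u') = (if u = u' then 1 else 0)"
      by blast
    define h' where "h' i j = (\<Sum>u<?N. w (Suc i) u * (\<Sum>w'<?N. h u w' * w (Suc j) w'))" for i j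
    have sym': "\<forall>i<m. \<forall>j<m. h' i j = h' j i"
      unfolding h'_def using sym_form[OF sym] by blast
    from exists_eig[OF sym'] False obtain v' lam' where
      "(\<Sum>u<m. v' u * v' u) = 1" "\<forall>u<m. (\<Sum>w<m. h' u w * v' w) = lam' * v' u" by force
    from Suc.IH[OF sym' this] obtain p mu' where
      pon: "\<forall>i<m. \<forall>j<m. (\<Sum>u<m. p i u * p j u) = (if i = j then 1 else 0)"
      and pev: "\<forall>i<m. \<forall>u<m. (\<Sum>w<m. h' u w * p i w) = mu' i * p i u" by blast
    define q where "q i u = (if i = 0 then v u else (\<Sum>j<m. p (i - 1) j * w (Suc j) u))" for i u
    define mu where "mu i = (if i = 0 then lam else mu' (i - 1))" for i
    have vw: "(\<Sum>u<?N. v u * w (Suc j) u) = 0" if "j < m" for j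
    proof -
      have "(\<Sum>u<?N. v u * w (Suc j) u) = (\<Sum>u<?N. w 0 u * w (Suc j) u)"
        using w0 by (intro sum.cong refl, auto)
      also have "\<dots> = 0" using on that by auto
      finally show ?thesis .
    qed
    have q0: "\<forall>u<?N. q 0 u = v u" unfolding q_def by simp
    have qon: "\<forall>i<?N. \<forall>j<?N. (\<Sum>u<?N. q i u * q j u) = (if i = j then 1 else 0)"
    proof (intro allI impI)
      fix i j assume i: "i < ?N" and j: "j < ?N"
      have mixed: "(\<Sum>u<?N. v u * (\<Sum>j<m. a j * w (Suc j) u)) = 0" for a
      proof -
        have "(\<Sum>u<?N. v u * (\<Sum>j<m. a j * w (Suc j) u))
            = (\<Sum>j<m. a j * (\<Sum>u<?N. v u * w (Suc j) u))"
          unfolding sum_distrib_left by (subst sum.swap) (simp add: mult_ac)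
        also have "\<dots> = 0" using vw by simp
        finally show ?thesis .
      qed
      show "(\<Sum>u<?N. q i u * q j u) = (if i = j then 1 else 0)"
      proof (cases "i = 0")
        case i0: True
        show ?thesis
        proof (cases "j = 0")
          case True then show ?thesis using i0 v1 q0 by (simp add: q_def)
        next
          case False then show ?thesis using i0 mixed by (simp add: q_def)
        qed
      next
        case i0: False
        show ?thesis
        proof (cases "j = 0")
          case True then show ?thesis using i0 mixed[of "p (i - 1)"]
            by (simp add: q_def mult.commute)
        next
          case False 
          have "(\<Sum>u<?N. q i u * q j u) = (\<Sum>l<m. p (i - 1) l * p (j - 1) l)"
            unfolding q_def using i0 False by (simp add: double_orth[OF on])
          also have "\<dots> = (if i - 1 = j - 1 then 1 else 0)" using pon i j i0 False by auto
          also have "\<dots> = (if i = j then 1 else 0)" using i0 False by auto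
          finally show ?thesis .
        qed
      qed
    qed
    have Hw: "(\<Sum>w'<?N. h u w' * w (Suc j) w') = (\<Sum>l<m. h' l j * w (Suc l) u)"
      if u: "u < ?N" and j: "j < m" for u j
    proof -
      let ?z = "\<lambda>u. (\<Sum>w'<?N. h u w' * w (Suc j) w')"
      have "?z u = (\<Sum>l<?N. (\<Sum>u'<?N. w l u' * ?z u') * w l u)" by (rule expand[OF comp u])
      also have "\<dots> = (\<Sum>u'<?N. w 0 u' * ?z u') * w 0 u + (\<Sum>l<m. h' l j * w (Suc l) u)"
        unfolding sum.lessThan_Suc_shift h'_def by simp
      also have "(\<Sum>u'<?N. w 0 u' * ?z u') = (\<Sum>u'<?N. w (Suc j) u' * (\<Sum>w'<?N. h u' w' * v w'))"
      proof -
        have "(\<Sum>u'<?N. w 0 u' * ?z u') = (\<Sum>u'<?N. v u' * ?z u')" using w0 by (intro sum.cong, auto)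
        also have "\<dots> = (\<Sum>u'<?N. w (Suc j) u' * (\<Sum>w'<?N. h u' w' * v w'))" by (rule sym_form[OF sym])
        finally show ?thesis .
      qed
      also have "\<dots> = lam * (\<Sum>u'<?N. v u' * w (Suc j) u')"
        using ev by (simp add: sum_distrib_left mult_ac)
      also have "\<dots> = 0" using vw[OF j] by simp
      finally show ?thesis by simp
    qed
    have qev: "\<forall>i<?N. \<forall>u<?N. (\<Sum>w'<?N. h u w' * q i w') = mu i * q i u"
    proof (intro allI impI)
      fix i u assume i: "i < ?N" and u: "u < ?N"
      show "(\<Sum>w'<?N. h u w' * q i w') = mu i * q i u"
      proof (cases "i = 0")
        case True
        then show ?thesis using ev u unfolding q_def mu_def by simp
      next
        case False
        define i' where "i' = i - 1"
        have i': "i' < m" "i = Suc i'" using i False unfolding i'_def by auto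
        have "(\<Sum>w'<?N. h u w' * q i w') = (\<Sum>w'<?N. \<Sum>j<m. p i' j * (h u w' * w (Suc j) w'))"
          unfolding q_def using i' by (simp add: sum_distrib_left mult_ac)
        also have "\<dots> = (\<Sum>j<m. p i' j * (\<Sum>w'<?N. h u w' * w (Suc j) w'))"
          unfolding sum_distrib_left by (rule sum.swap)
        also have "\<dots> = (\<Sum>j<m. p i' j * (\<Sum>l<m. h' l j * w (Suc l) u))"
          using Hw[OF u] by simp
        also have "\<dots> = (\<Sum>l<m. (\<Sum>j<m. h' l j * p i' j) * w (Suc l) u)"
          unfolding sum_distrib_left sum_distrib_right by (subst sum.swap) (simp add: mult_ac)
        also have "\<dots> = (\<Sum>l<m. mu' i' * p i' l * w (Suc l) u)"
          using pev i' by simp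
        also have "\<dots> = mu i * q i u" unfolding q_def mu_def using i'
          by (simp add: sum_distrib_left mult_ac)
        finally show ?thesis .
      qed
    qed
    show ?thesis
      by (rule exI[of _ q], rule exI[of _ mu], insert q0 qon qev, auto simp: mu_def)
  qed
qed


declare sum.lessThan_Suc[simp]


lemma proots_lin_prod: "proots (\<Prod>a\<leftarrow>xs. [:- a, 1:]) = mset (xs :: real list)"
proof -
  have "proots (\<Prod>a\<leftarrow>xs. [:- a, 1:]) = proots (\<Prod>p\<leftarrow>map (\<lambda>a. [:- a, 1:]) xs. p)"
    by (simp add: comp_def)
  also have "\<dots> = (\<Sum>p\<leftarrow>map (\<lambda>a. [:- a, 1:]) xs. proots p)"
    by (rule proots_prod_list, auto)
  also have "\<dots> = mset xs" by (induction xs, auto)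
  finally show ?thesis .
qed

lemma eig_sorted:
  fixes h :: "nat \<Rightarrow> nat \<Rightarrow> real" and q :: "nat \<Rightarrow> nat \<Rightarrow> real"
  assumes on: "\<forall>i<n. \<forall>j<n. (\<Sum>u<n. q i u * q j u) = (if i = j then 1 else 0)"
    and ev: "\<forall>i<n. \<forall>u<n. (\<Sum>w<n. h u w * q i w) = mu i * q i u"
  shows "eigenvalues_sorted (mat n n (\<lambda>(i, j). h i j)) = sort (map mu [0..<n])"
proof -
  define H where "H = mat n n (\<lambda>(i, j). h i j)"
  define Q where "Q = mat n n (\<lambda>(u, i). q i u)"
  define L where "L = mat n n (\<lambda>(i, j). if i = j then mu i else 0)"
  have c: "H \<in> carrier_mat n n" "Q \<in> carrier_mat n n" "transpose_mat Q \<in> carrier_mat n n"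
     "L \<in> carrier_mat n n"
    unfolding H_def Q_def L_def by auto
  have QtQ: "transpose_mat Q * Q = 1\<^sub>m n"
    by (rule eq_matI, insert on, auto simp: Q_def scalar_prod_def lessThan_atLeast0)
  from mat_mult_left_right_inverse[OF c(3) c(2) this]
  have QQt: "Q * transpose_mat Q = 1\<^sub>m n" .
  have HQ: "H * Q = Q * L"
  proof (rule eq_matI)
    fix i j assume i: "i < dim_row (Q * L)" and j: "j < dim_col (Q * L)"
    hence i: "i < n" and j: "j < n" using c by auto
    have "(H * Q) $$ (i, j) = (\<Sum>w<n. h i w * q j w)"
      using i j by (auto simp: H_def Q_def scalar_prod_def lessThan_atLeast0)
    also have "\<dots> = mu j * q j i" using ev i j by auto
    also have "\<dots> = (\<Sum>l\<in>{0..<n}. q l i * (if l = j then mu l else 0))"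
      using j by (simp add: if_distrib cong: if_cong)
    also have "\<dots> = (Q * L) $$ (i, j)"
      using i j by (auto simp: L_def Q_def scalar_prod_def)
    finally show "(H * Q) $$ (i, j) = (Q * L) $$ (i, j)" .
  qed (insert c, auto)
  have "H = H * (Q * transpose_mat Q)" using QQt c by simp
  also have "\<dots> = (H * Q) * transpose_mat Q" using c by (simp add: assoc_mult_mat)
  also have "\<dots> = Q * L * transpose_mat Q" unfolding HQ ..
  finally have HL: "H = Q * L * transpose_mat Q" .
  have "similar_mat_wit H L Q (transpose_mat Q)"
    unfolding similar_mat_wit_def Let_def using c QQt QtQ HL by auto
  hence "similar_mat H L" unfolding similar_mat_def by blast
  hence "char_poly H = char_poly L" by (rule char_poly_similar)
  also have "\<dots> = (\<Prod>a\<leftarrow>diag_mat L. [:- a, 1:])"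
    by (rule char_poly_upper_triangular[OF c(4)], auto simp: upper_triangular_def L_def)
  also have "diag_mat L = map mu [0..<n]" unfolding diag_mat_def L_def by auto
  finally have "char_poly H = (\<Prod>a\<leftarrow>map mu [0..<n]. [:- a, 1:])" .
  then show ?thesis unfolding eigenvalues_sorted_def H_def[symmetric]
    using proots_lin_prod[of "map mu [0..<n]"] by (simp only: sorted_list_of_multiset_mset)
qed


lemma sum_if_less:
  fixes c :: "nat \<Rightarrow> real"
  assumes "K \<le> N"
  shows "(\<Sum>i<N. if i < K then c i else 0) = (\<Sum>i<K. c i)"
proof -
  have "(\<Sum>i<N. if i < K then c i else 0) = (\<Sum>i\<in>{..<K}. if i < K then c i else 0)"
    by (rule sum.mono_neutral_right, insert assms, auto)
  also have "\<dots> = (\<Sum>i<K. c i)" by simp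
  finally show ?thesis .
qed

lemma rearr:
  fixes g w :: "nat \<Rightarrow> real" and K N :: nat
  assumes mono: "\<forall>i j. i \<le> j \<longrightarrow> j < N \<longrightarrow> g i \<le> g j" and g0: "\<forall>i<N. g i \<ge> 0"
   and w01: "\<forall>i<N. 0 \<le> w i \<and> w i \<le> 1" and ws: "(\<Sum>i<N. w i) \<ge> real K"
  shows "(\<Sum>i<K. g i) \<le> (\<Sum>i<N. g i * w i)"
proof -
  have "(\<Sum>i<N. w i) \<le> (\<Sum>i<N. 1)" by (rule sum_mono, insert w01, auto)
  hence KN: "K \<le> N" using ws by simp
  show ?thesis
  proof (cases "K = 0")
    case True
    then show ?thesis using g0 w01 by (simp, intro sum_nonneg mult_nonneg_nonneg, auto)
  next
    case False
    define T where "T = g (K - 1)"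
    have T0: "T \<ge> 0" using g0 KN False unfolding T_def by auto
    have trm: "g i * w i - (if i < K then g i else 0) \<ge> T * (w i - (if i < K then 1 else 0))"
      if i: "i < N" for i
    proof (cases "i < K")
      case True
      have "g i \<le> T" unfolding T_def using mono True KN by auto
      moreover have "w i - 1 \<le> 0" using w01 i by auto
      ultimately have "g i * (w i - 1) \<ge> T * (w i - 1)" by (rule mult_right_mono_neg)
      then show ?thesis using True by (simp add: algebra_simps)
    next
      case False
      have "g i \<ge> T" unfolding T_def using mono False i by auto
      then show ?thesis using False w01 i by (simp add: mult_right_mono)
    qed
    have "(\<Sum>i<N. g i * w i - (if i < K then g i else 0)) \<ge> (\<Sum>i<N. T * (w i - (if i < K then 1 else 0)))"
      by (rule sum_mono, rule trm, auto)
    also have "(\<Sum>i<N. T * (w i - (if i < K then 1 else 0))) = T * ((\<Sum>i<N. w i) - real K)"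
    proof -
      have "(\<Sum>i<N. (if i < K then 1 else 0::real)) = real K"
        using sum_if_less[OF KN, of "\<lambda>_. 1"] by simp
      then show ?thesis by (simp add: sum_distrib_left[symmetric] sum_subtractf)
    qed
    also have "\<dots> \<ge> 0" using T0 ws by simp
    moreover have "(\<Sum>i<N. g i * w i - (if i < K then g i else 0)) = (\<Sum>i<N. g i * w i) - (\<Sum>i<K. g i)"
    proof -
      have "(\<Sum>i<N. (if i < K then g i else 0)) = (\<Sum>i<K. g i)"
        by (rule sum_if_less[OF KN])
      then show ?thesis by (simp add: sum_subtractf)
    qed
    ultimately show ?thesis by linarith
  qed
qed

lemma sort_zero_cons:
  fixes xs :: "real list"
  assumes "\<forall>x\<in>set xs. x \<ge> 0"
  shows "sort (0 # xs) = 0 # sort xs"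
  by (rule properties_for_sort, insert assms, auto)

lemma main_ineq:
  fixes mu w :: "nat \<Rightarrow> real" and f :: "real \<Rightarrow> real" and K n :: nat
  assumes n: "n \<ge> 1" and mu0: "mu 0 = 0" and mupos: "\<forall>i<n. mu i \<ge> 0"
    and w0: "w 0 = 0" and w01: "\<forall>i<n. 0 \<le> w i \<and> w i \<le> 1" and ws: "(\<Sum>i<n. w i) \<ge> real K"
    and fmono: "\<forall>x y. 0 \<le> x \<longrightarrow> x \<le> y \<longrightarrow> f x \<le> f y" and f0: "\<forall>x\<ge>0. f x \<ge> 0"
  shows "(\<Sum>j=1..K. f (sort (map mu [0..<n]) ! j)) \<le> (\<Sum>i<n. f (mu i) * w i)"
proof -
  define N where "N = n - 1"
  have nN: "n = Suc N" using n unfolding N_def by auto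
  define ls where "ls = map (\<lambda>i. mu (Suc i)) [0..<N]"
  define c' where "c' = sort ls"
  have "map mu [0..<n] = 0 # ls" unfolding nN ls_def using mu0
    by (simp add: map_upt_Suc del: upt_Suc)
  moreover have "\<forall>x\<in>set ls. x \<ge> 0" unfolding ls_def using mupos nN by auto
  ultimately have sc: "sort (map mu [0..<n]) = 0 # c'" unfolding c'_def using sort_zero_cons by metis
  have len: "length c' = N" "length ls = N" unfolding c'_def ls_def by auto
  have "mset c' = mset ls" unfolding c'_def by simp
  from permutation_Ex_bij[OF this] obtain p where
    p: "bij_betw p {..<N} {..<N}" and cp: "\<forall>i<N. c' ! i = ls ! (p i)"
    unfolding len by auto
  have pN: "i < N \<Longrightarrow> p i < N" for i using p by (auto dest: bij_betw_apply)
  have c'v: "i < N \<Longrightarrow> c' ! i = mu (Suc (p i))" for i using cp pN unfolding ls_def by auto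
  have c'0: "i < N \<Longrightarrow> c' ! i \<ge> 0" for i using c'v mupos pN nN by auto
  have sorted: "sorted c'" unfolding c'_def by simp
  define g where "g i = f (c' ! i)" for i
  define w' where "w' j = w (Suc (p j))" for j
  have sumw: "(\<Sum>j<N. w' j) = (\<Sum>i<N. w (Suc i))"
    unfolding w'_def by (rule sum.reindex_bij_betw[OF p, of "\<lambda>i. w (Suc i)"])
  have sumgw: "(\<Sum>j<N. g j * w' j) = (\<Sum>i<N. f (mu (Suc i)) * w (Suc i))"
  proof -
    have "(\<Sum>j<N. g j * w' j) = (\<Sum>j<N. f (mu (Suc (p j))) * w (Suc (p j)))"
      unfolding g_def w'_def by (rule sum.cong, auto simp: c'v)
    also have "\<dots> = (\<Sum>i<N. f (mu (Suc i)) * w (Suc i))"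
      by (rule sum.reindex_bij_betw[OF p, of "\<lambda>i. f (mu (Suc i)) * w (Suc i)"])
    finally show ?thesis .
  qed
  have "(\<Sum>i<K. g i) \<le> (\<Sum>i<N. g i * w' i)"
  proof (rule rearr)
    show "\<forall>i j. i \<le> j \<longrightarrow> j < N \<longrightarrow> g i \<le> g j"
      using sorted c'0 fmono len unfolding g_def by (auto simp: sorted_iff_nth_mono)
    show "\<forall>i<N. 0 \<le> g i" using c'0 f0 unfolding g_def by auto
    show "\<forall>i<N. 0 \<le> w' i \<and> w' i \<le> 1" using w01 pN nN unfolding w'_def by auto
    show "real K \<le> (\<Sum>i<N. w' i)" using ws w0 unfolding sumw nN sum.lessThan_Suc_shift by simp
  qed
  also have "\<dots> = (\<Sum>i<n. f (mu i) * w i)" unfolding sumgw nN sum.lessThan_Suc_shift using w0 by simp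
  also have "(\<Sum>i<K. g i) = (\<Sum>j=1..K. f (sort (map mu [0..<n]) ! j))"
  proof -
    have "(\<Sum>j=1..K. f (sort (map mu [0..<n]) ! j)) = (\<Sum>j=Suc 0..<Suc K. f ((0 # c') ! j))"
      unfolding sc by (rule sum.cong, auto)
    also have "\<dots> = (\<Sum>j=0..<K. f ((0 # c') ! Suc j))" by (rule sum.shift_bounds_Suc_ivl)
    also have "\<dots> = (\<Sum>i<K. g i)" unfolding g_def by (simp add: lessThan_atLeast0)
    finally show ?thesis by simp
  qed
  finally show ?thesis .
qed


lemma complete_on:
  fixes q :: "nat \<Rightarrow> nat \<Rightarrow> real"
  assumes on: "\<forall>i<n. \<forall>j<n. (\<Sum>u<n. q i u * q j u) = (if i = j then 1 else 0)"
  shows "\<forall>u<n. \<forall>u'<n. (\<Sum>i<n. q i u * q i u') = (if u = u' then 1 else 0)"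
proof -
  define W where "W = mat n n (\<lambda>(u, i). q i u)"
  have W: "W \<in> carrier_mat n n" "transpose_mat W \<in> carrier_mat n n" unfolding W_def by auto
  have "transpose_mat W * W = 1\<^sub>m n"
    by (rule eq_matI, insert on, auto simp: W_def scalar_prod_def lessThan_atLeast0)
  from mat_mult_left_right_inverse[OF W(2) W(1) this]
  have WW: "W * transpose_mat W = 1\<^sub>m n" .
  show ?thesis
  proof (intro allI impI)
    fix u u' assume u: "u < n" and u': "u' < n"
    have "(W * transpose_mat W) $$ (u, u') = (\<Sum>i<n. q i u * q i u')"
      using u u' by (auto simp: W_def scalar_prod_def lessThan_atLeast0)
    then show "(\<Sum>i<n. q i u * q i u') = (if u = u' then 1 else 0)"
      unfolding WW using u u' by simp
  qed
qed

lemma parseval: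
  fixes q :: "nat \<Rightarrow> nat \<Rightarrow> real"
  assumes comp: "\<forall>u<n. \<forall>u'<n. (\<Sum>i<n. q i u * q i u') = (if u = u' then 1 else 0)"
  shows "(\<Sum>u<n. y u * z u) = (\<Sum>i<n. (\<Sum>u<n. q i u * y u) * (\<Sum>u<n. q i u * z u))"
proof -
  have "(\<Sum>u<n. y u * z u) = (\<Sum>u<n. y u * (\<Sum>i<n. (\<Sum>u'<n. q i u' * z u') * q i u))"
    by (rule sum.cong, simp, subst expand[OF comp, of _ z], auto)
  also have "\<dots> = (\<Sum>u<n. \<Sum>i<n. (\<Sum>u'<n. q i u' * z u') * (q i u * y u))"
    by (simp add: sum_distrib_left mult_ac)
  also have "\<dots> = (\<Sum>i<n. \<Sum>u<n. (\<Sum>u'<n. q i u' * z u') * (q i u * y u))" by (rule sum.swap)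
  also have "\<dots> = (\<Sum>i<n. (\<Sum>u<n. q i u * y u) * (\<Sum>u<n. q i u * z u))"
    by (intro sum.cong refl) (simp add: sum_product sum_distrib_right mult_ac)
  finally show ?thesis .
qed

lemma quad_forms:
  fixes h q :: "nat \<Rightarrow> nat \<Rightarrow> real"
  assumes sym: "\<forall>u<n. \<forall>v<n. h u v = h v u"
    and on: "\<forall>i<n. \<forall>j<n. (\<Sum>u<n. q i u * q j u) = (if i = j then 1 else 0)"
    and ev: "\<forall>i<n. \<forall>u<n. (\<Sum>w<n. h u w * q i w) = mu i * q i u"
  shows "(\<Sum>u<n. x u * (\<Sum>w<n. h u w * x w)) = (\<Sum>i<n. mu i * (\<Sum>u<n. q i u * x u)^2)"
    and "(\<Sum>u<n. (\<Sum>w<n. h u w * x w)^2) = (\<Sum>i<n. (mu i)^2 * (\<Sum>u<n. q i u * x u)^2)"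
proof -
  note comp = complete_on[OF on]
  have qH: "(\<Sum>u<n. q i u * (\<Sum>w<n. h u w * x w)) = mu i * (\<Sum>u<n. q i u * x u)" if i: "i < n" for i
  proof -
    have "(\<Sum>u<n. q i u * (\<Sum>w<n. h u w * x w)) = (\<Sum>u<n. x u * (\<Sum>w<n. h u w * q i w))"
      by (rule sym_form[OF sym])
    also have "\<dots> = (\<Sum>u<n. x u * (mu i * q i u))" using ev i by auto
    also have "\<dots> = mu i * (\<Sum>u<n. q i u * x u)" by (simp add: sum_distrib_left mult_ac)
    finally show ?thesis .
  qed
  show "(\<Sum>u<n. x u * (\<Sum>w<n. h u w * x w)) = (\<Sum>i<n. mu i * (\<Sum>u<n. q i u * x u)^2)"
    unfolding parseval[OF comp, of x] by (rule sum.cong, auto simp: qH power2_eq_square)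
  show "(\<Sum>u<n. (\<Sum>w<n. h u w * x w)^2) = (\<Sum>i<n. (mu i)^2 * (\<Sum>u<n. q i u * x u)^2)"
    unfolding power2_eq_square parseval[OF comp, of "\<lambda>u. (\<Sum>w<n. h u w * x w)"]
    by (rule sum.cong, auto simp: qH)
qed


lemma diag_left:
  assumes M: "M \<in> carrier_mat n n"
  shows "mat n n (\<lambda>(i, j). if i = j then f i else 0) * M = mat n n (\<lambda>(i, j). f i * M $$ (i, j))"
proof (rule eq_matI)
  fix i j assume i: "i < dim_row (mat n n (\<lambda>(i, j). f i * M $$ (i, j)))"
    and j: "j < dim_col (mat n n (\<lambda>(i, j). f i * M $$ (i, j)))"
  hence i: "i < n" and j: "j < n" by auto
  have "(mat n n (\<lambda>(i, j). if i = j then f i else 0) * M) $$ (i, j)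
     = (\<Sum>l\<in>{0..<n}. (if i = l then f i else 0) * M $$ (l, j))"
    using i j M by (auto simp: scalar_prod_def)
  also have "\<dots> = (\<Sum>l\<in>{0..<n}. if l = i then f i * M $$ (i, j) else 0)" by (rule sum.cong, auto)
  also have "\<dots> = f i * M $$ (i, j)" using i by simp
  finally show "(mat n n (\<lambda>(i, j). if i = j then f i else 0) * M) $$ (i, j)
     = mat n n (\<lambda>(i, j). f i * M $$ (i, j)) $$ (i, j)" using i j by simp
qed (insert M, auto)

lemma diag_right:
  assumes M: "M \<in> carrier_mat n n"
  shows "M * mat n n (\<lambda>(i, j). if i = j then f i else 0) = mat n n (\<lambda>(i, j). M $$ (i, j) * f j)"
proof (rule eq_matI)
  fix i j assume i: "i < dim_row (mat n n (\<lambda>(i, j). M $$ (i, j) * f j))"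
    and j: "j < dim_col (mat n n (\<lambda>(i, j). M $$ (i, j) * f j))"
  hence i: "i < n" and j: "j < n" by auto
  have "(M * mat n n (\<lambda>(i, j). if i = j then f i else 0)) $$ (i, j)
     = (\<Sum>l\<in>{0..<n}. M $$ (i, l) * (if l = j then f l else 0))"
    using i j M by (auto simp: scalar_prod_def)
  also have "\<dots> = (\<Sum>l\<in>{0..<n}. if l = j then M $$ (i, j) * f j else 0)" by (rule sum.cong, auto)
  also have "\<dots> = M $$ (i, j) * f j" using j by simp
  finally show "(M * mat n n (\<lambda>(i, j). if i = j then f i else 0)) $$ (i, j)
     = mat n n (\<lambda>(i, j). M $$ (i, j) * f j) $$ (i, j)" using i j by simp
qed (insert M, auto)

lemma H_entries:
  assumes sg: "simple_graph n E" and dpos: "\<forall>u<n. deg n E u \<ge> 1"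
  shows "renorm_laplacian n E = mat n n (\<lambda>(i, j). (if i = j then 1 else 0)
      - adj E i j / sqrt (real (deg n E i) * real (deg n E j)))"
proof -
  define M where "M = deg_matrix n E - adj_matrix n E"
  have M: "M \<in> carrier_mat n n" unfolding M_def deg_matrix_def adj_matrix_def by auto
  define f where "f i = 1 / sqrt (real (deg n E i))" for i
  have S: "deg_inv_sqrt_matrix n E = mat n n (\<lambda>(i, j). if i = j then f i else 0)"
    unfolding deg_inv_sqrt_matrix_def f_def by simp
  have SM: "mat n n (\<lambda>(i, j). f i * M $$ (i, j)) \<in> carrier_mat n n" by auto
  have "renorm_laplacian n E = mat n n (\<lambda>(i, j). f i * M $$ (i, j)) * mat n n (\<lambda>(i, j). if i = j then f i else 0)"
    unfolding renorm_laplacian_def S M_def[symmetric] diag_left[OF M] ..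
  also have "\<dots> = mat n n (\<lambda>(i, j). f i * M $$ (i, j) * f j)"
    unfolding diag_right[OF SM] by (rule eq_matI, auto)
  also have "\<dots> = mat n n (\<lambda>(i, j). (if i = j then 1 else 0)
      - adj E i j / sqrt (real (deg n E i) * real (deg n E j)))"
  proof (rule eq_matI)
    fix i j assume "i < dim_row (mat n n (\<lambda>(i, j). (if i = j then 1 else 0)
      - adj E i j / sqrt (real (deg n E i) * real (deg n E j))))"
      "j < dim_col (mat n n (\<lambda>(i, j). (if i = j then 1 else 0)
      - adj E i j / sqrt (real (deg n E i) * real (deg n E j))))"
    hence i: "i < n" and j: "j < n" by auto
    have di: "real (deg n E i) > 0" using dpos i by fastforce
    have dj: "real (deg n E j) > 0" using dpos j by fastforce
    have Mij: "M $$ (i, j) = (if i = j then real (deg n E i) else 0) - adj E i j"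
      using i j unfolding M_def deg_matrix_def adj_matrix_def by simp
    have aii: "adj E i i = 0" using sg unfolding simple_graph_def adj_def by simp
    show "mat n n (\<lambda>(i, j). f i * M $$ (i, j) * f j) $$ (i, j) = mat n n (\<lambda>(i, j). (if i = j then 1 else 0)
      - adj E i j / sqrt (real (deg n E i) * real (deg n E j))) $$ (i, j)"
    proof (cases "i = j")
      case True
      then show ?thesis using i di aii Mij unfolding f_def by (simp add: field_simps)
    next
      case False
      then show ?thesis using i j di dj Mij unfolding f_def by (simp add: field_simps real_sqrt_mult)
    qed
  qed auto
  finally show ?thesis .
qed

lemma deg_sum_adj:
  assumes "u < n"
  shows "real (deg n E u) = (\<Sum>w<n. adj E u w)"
proof -
  have "(\<Sum>w<n. adj E u w) = (\<Sum>w\<in>{v. v < n \<and> E u v}. 1)"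
    unfolding adj_def by (rule sum.mono_neutral_cong_right, auto)
  then show ?thesis unfolding deg_def by simp
qed

lemma deg_pos:
  assumes sg: "simple_graph n E" and cg: "connected_graph n E" and n: "n \<ge> 2" and u: "u < n"
  shows "deg n E u \<ge> 1"
proof -
  define v where "v = (if u = 0 then 1 else 0::nat)"
  have v: "v < n" "v \<noteq> u" unfolding v_def using n by auto
  have "E\<^sup>*\<^sup>* u v" using cg u v unfolding connected_graph_def by auto
  then obtain x where "E u x" using v(2) by (metis converse_rtranclpE)
  hence "x \<in> {v. v < n \<and> E u v}" using sg unfolding simple_graph_def by auto
  hence "card {v. v < n \<and> E u v} > 0" by (subst card_gt_0_iff, auto)
  then show ?thesis unfolding deg_def by simp
qed

lemma handshake:
  assumes sg: "simple_graph n E"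
  shows "(\<Sum>u<n. real (deg n E u)) = 2 * real (num_edges n E)"
proof -
  define S1 where "S1 = {(u, v). u < v \<and> v < n \<and> E u v}"
  define S2 where "S2 = {(u, v). v < u \<and> u < n \<and> E u v}"
  have fin: "finite S1" "finite S2"
  proof -
    have "S1 \<subseteq> {..<n} \<times> {..<n}" "S2 \<subseteq> {..<n} \<times> {..<n}" unfolding S1_def S2_def by auto
    thus "finite S1" "finite S2" by (auto intro: finite_subset)
  qed
  have "(\<Sum>u<n. deg n E u) = card (SIGMA u:{..<n}. {v. v < n \<and> E u v})"
    unfolding deg_def by (subst card_SigmaI, auto)
  also have "(SIGMA u:{..<n}. {v. v < n \<and> E u v}) = S1 \<union> S2"
    using sg unfolding S1_def S2_def simple_graph_def by auto (metis linorder_neqE_nat)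
  also have "card (S1 \<union> S2) = card S1 + card S2"
    by (rule card_Un_disjoint, insert fin, auto simp: S1_def S2_def)
  also have "card S2 = card S1"
  proof (rule bij_betw_same_card[of "\<lambda>(u, v). (v, u)"])
    show "bij_betw (\<lambda>(u, v). (v, u)) S2 S1"
      unfolding bij_betw_def inj_on_def S1_def S2_def using sg unfolding simple_graph_def
      by (auto simp: image_def)
  qed
  finally have "(\<Sum>u<n. deg n E u) = 2 * num_edges n E" unfolding num_edges_def S1_def by simp
  hence "real (\<Sum>u<n. deg n E u) = 2 * real (num_edges n E)" by simp
  then show ?thesis by simp
qed


lemma psd:
  fixes a :: "nat \<Rightarrow> nat \<Rightarrow> real" and d x :: "nat \<Rightarrow> real"
  assumes asym: "\<forall>u<n. \<forall>w<n. a u w = a w u" and a0: "\<forall>u w. a u w \<ge> 0"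
    and dsum: "\<forall>u<n. d u = (\<Sum>w<n. a u w)" and dpos: "\<forall>u<n. d u > 0"
  shows "(\<Sum>u<n. x u * (x u - (\<Sum>w<n. a u w * x w / sqrt (d u * d w)))) \<ge> 0"
proof -
  define y where "y u = x u / sqrt (d u)" for u
  have xy: "x u = sqrt (d u) * y u" if "u < n" for u using dpos that unfolding y_def by force
  have "(\<Sum>u<n. x u * (x u - (\<Sum>w<n. a u w * x w / sqrt (d u * d w))))
      = (\<Sum>u<n. \<Sum>w<n. a u w * (y u)^2 - a u w * y u * y w)"
  proof (rule sum.cong[OF refl])
    fix u assume u: "u \<in> {..<n}"
    have "x u * (x u - (\<Sum>w<n. a u w * x w / sqrt (d u * d w)))
        = d u * (y u)^2 - (\<Sum>w<n. a u w * y u * y w)"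
    proof -
      have du: "d u > 0" using dpos u by auto
      have "x u * x u = d u * (y u)^2" using xy[of u] u du by (simp add: power2_eq_square abs_of_pos)
      moreover have "x u * (\<Sum>w<n. a u w * x w / sqrt (d u * d w)) = (\<Sum>w<n. a u w * y u * y w)"
        unfolding sum_distrib_left
      proof (rule sum.cong[OF refl])
        fix w assume w: "w \<in> {..<n}"
        have "sqrt (d u) > 0" "sqrt (d w) > 0" using dpos u w by auto
        then show "x u * (a u w * x w / sqrt (d u * d w)) = a u w * y u * y w"
          using xy[of u] xy[of w] u w by (simp add: real_sqrt_mult field_simps)
      qed
      ultimately show ?thesis by (simp add: right_diff_distrib)
    qed
    also have "\<dots> = (\<Sum>w<n. a u w * (y u)^2 - a u w * y u * y w)"
      using dsum u by (simp add: sum_subtractf sum_distrib_right)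
    finally show "x u * (x u - (\<Sum>w<n. a u w * x w / sqrt (d u * d w)))
        = (\<Sum>w<n. a u w * (y u)^2 - a u w * y u * y w)" .
  qed
  also have "\<dots> = (\<Sum>u<n. \<Sum>w<n. a u w * (y u - y w)^2) / 2"
  proof -
    have sw: "(\<Sum>u<n. \<Sum>w<n. a u w * (y w)^2) = (\<Sum>u<n. \<Sum>w<n. a u w * (y u)^2)"
    proof -
      have "(\<Sum>u<n. \<Sum>w<n. a u w * (y w)^2) = (\<Sum>w<n. \<Sum>u<n. a u w * (y w)^2)" by (rule sum.swap)
      also have "\<dots> = (\<Sum>w<n. \<Sum>u<n. a w u * (y w)^2)" using asym by (intro sum.cong, auto)
      finally show ?thesis .
    qed
    have "(\<Sum>u<n. \<Sum>w<n. a u w * (y u - y w)^2)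
       = (\<Sum>u<n. \<Sum>w<n. a u w * (y u)^2) + (\<Sum>u<n. \<Sum>w<n. a u w * (y w)^2)
         - 2 * (\<Sum>u<n. \<Sum>w<n. a u w * y u * y w)"
      by (simp add: power2_diff algebra_simps sum.distrib sum_subtractf sum_distrib_left)
    then show ?thesis unfolding sw by (simp add: sum_subtractf algebra_simps)
  qed
  also have "\<dots> \<ge> 0" using a0 by (intro divide_nonneg_pos sum_nonneg mult_nonneg_nonneg, auto)
  finally show ?thesis .
qed


lemma sq_cancel: "(A::real) > 0 \<Longrightarrow> B > 0 \<Longrightarrow> sqrt B * sqrt (A / B) / sqrt A = 1"
  by (simp add: real_sqrt_divide)

lemma Fdot:
  fixes \<phi> :: "nat \<Rightarrow> real"
  assumes "u < n" "v < n" "u \<noteq> v"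
  shows "(\<Sum>x<n. ((if x = u then A else 0) - (if x = v then B else 0)) * \<phi> x) = A * \<phi> u - B * \<phi> v"
proof -
  have "(\<Sum>x<n. ((if x = u then A else 0) - (if x = v then B else 0)) * \<phi> x)
      = (\<Sum>x<n. (if x = u then A * \<phi> u else 0) - (if x = v then B * \<phi> v else 0))"
    by (rule sum.cong, insert assms, auto)
  also have "\<dots> = A * \<phi> u - B * \<phi> v" using assms by (simp add: sum_subtractf)
  finally show ?thesis .
qed



theorem mainTheorem6:
  fixes n k :: nat and E :: "nat \<Rightarrow> nat \<Rightarrow> bool" and M0 :: "(nat \<times> nat) set"
  assumes "simple_graph n E" and "connected_graph n E" and "n \<ge> 2"
    and "k \<ge> 1"
    and "M0 \<subseteq> {(u, v). u < n \<and> v < n \<and> u \<noteq> v}"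
    and "(\<Sum>(u, v)\<in>M0. real (deg n E u) + real (deg n E v))
           \<ge> 4 * (real k - 1) * real (num_edges n E)"
  shows "((\<Sum>j=1..k-1. eigenvalues_sorted (renorm_laplacian n E) ! j)
           \<le> 1 / (4 * real (num_edges n E)) *
             (\<Sum>(u, v)\<in>M0. real (deg n E u) + real (deg n E v) + 2 * adj E u v)) \<and>
       ((\<Sum>j=1..k-1. (eigenvalues_sorted (renorm_laplacian n E) ! j)^2)
           \<le> 1 / (4 * real (num_edges n E)) *
             (\<Sum>(u, v)\<in>M0. real (deg n E u) + real (deg n E v) + 4 * adj E u v
                + (\<Sum>x<n. 1 / real (deg n E x) *
                     (adj E x v * sqrt (real (deg n E u) / real (deg n E v))
                      - adj E x u * sqrt (real (deg n E v) / real (deg n E u)))^2)))"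
proof -
  note sg = assms(1) and cg = assms(2) and n2 = assms(3) and k1 = assms(4) and M0 = assms(5)
    and Mbig = assms(6)
  define d where "d u = real (deg n E u)" for u
  define m where "m = real (num_edges n E)"
  have dpos: "\<forall>u<n. d u > 0" using deg_pos[OF sg cg n2] unfolding d_def by fastforce
  have dsum: "\<forall>u<n. d u = (\<Sum>w<n. adj E u w)" using deg_sum_adj unfolding d_def by blast
  have hs: "(\<Sum>u<n. d u) = 2 * m" using handshake[OF sg] unfolding d_def m_def .
  have mpos: "m > 0"
  proof -
    have "0 \<in> {..<n}" using n2 by simp
    hence "{..<n} \<noteq> {}" by blast
    hence "(\<Sum>u<n. d u) > 0" using dpos by (intro sum_pos, auto)
    thus ?thesis using hs by simp
  qed
  have asym: "\<And>u v. adj E u v = adj E v u" using sg unfolding simple_graph_def adj_def by metis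
  have a0: "\<forall>u v. adj E u v \<ge> 0" unfolding adj_def by simp
  have aii: "\<And>u. adj E u u = 0" using sg unfolding simple_graph_def adj_def by simp
  define h where "h i j = (if i = j then 1 else 0) - adj E i j / sqrt (d i * d j)" for i j
  have Hmat: "renorm_laplacian n E = mat n n (\<lambda>(i, j). h i j)"
  proof -
    have "\<forall>u<n. deg n E u \<ge> 1" using deg_pos[OF sg cg n2] by blast
    from H_entries[OF sg this] show ?thesis unfolding h_def d_def by simp
  qed
  have hsym: "\<forall>u<n. \<forall>v<n. h u v = h v u" unfolding h_def using asym by (simp add: mult.commute)
  have Hx: "(\<Sum>w<n. h u w * x w) = x u - (\<Sum>w<n. adj E u w * x w / sqrt (d u * d w))"
    if u: "u < n" for u x
  proof -
    have "(\<Sum>w<n. h u w * x w) = (\<Sum>w<n. (if w = u then x u else 0) - adj E u w * x w / sqrt (d u * d w))"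
      unfolding h_def by (rule sum.cong, auto simp: left_diff_distrib)
    also have "\<dots> = x u - (\<Sum>w<n. adj E u w * x w / sqrt (d u * d w))"
      using u by (simp add: sum_subtractf)
    finally show ?thesis .
  qed
  define s where "s = sqrt (2 * m)"
  have spos: "s > 0" unfolding s_def using mpos by simp
  define psi where "psi u = sqrt (d u) / s" for u
  have psi1: "(\<Sum>u<n. psi u * psi u) = 1"
  proof -
    have "(\<Sum>u<n. psi u * psi u) = (\<Sum>u<n. d u) / (s * s)"
      unfolding psi_def sum_divide_distrib by (rule sum.cong, insert dpos, auto)
    also have "\<dots> = 1" unfolding hs s_def using mpos by simp
    finally show ?thesis .
  qed
  have psiev: "\<forall>u<n. (\<Sum>w<n. h u w * psi w) = 0 * psi u"
  proof (intro allI impI)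
    fix u assume u: "u < n"
    have "(\<Sum>w<n. adj E u w * psi w / sqrt (d u * d w)) = (\<Sum>w<n. adj E u w / (sqrt (d u) * s))"
    proof (rule sum.cong[OF refl])
      fix w assume w: "w \<in> {..<n}"
      have "sqrt (d w) > 0" "sqrt (d u) > 0" using dpos u w by auto
      then show "adj E u w * psi w / sqrt (d u * d w) = adj E u w / (sqrt (d u) * s)"
        unfolding psi_def using spos by (simp add: real_sqrt_mult field_simps)
    qed
    also have "\<dots> = d u / (sqrt (d u) * s)" using dsum u by (simp add: sum_divide_distrib)
    also have "\<dots> = psi u" unfolding psi_def using dpos u 
      by (simp add: divide_divide_eq_left[symmetric] real_div_sqrt less_imp_le)
    finally show "(\<Sum>w<n. h u w * psi w) = 0 * psi u" using Hx[OF u] by simp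
  qed
  from spectral[OF hsym psi1 psiev] obtain q mu where
    q0: "\<forall>u<n. q 0 u = psi u" and mu0: "mu 0 = 0"
    and qon: "\<forall>i<n. \<forall>j<n. (\<Sum>u<n. q i u * q j u) = (if i = j then 1 else 0)"
    and qev: "\<forall>i<n. \<forall>u<n. (\<Sum>w<n. h u w * q i w) = mu i * q i u" by blast
  have esort: "eigenvalues_sorted (renorm_laplacian n E) = sort (map mu [0..<n])"
    unfolding Hmat by (rule eig_sorted[OF qon qev])
  note comp = complete_on[OF qon]
  have munn: "\<forall>i<n. mu i \<ge> 0"
  proof (intro allI impI)
    fix i assume i: "i < n"
    have "(\<Sum>u<n. q i u * (\<Sum>w<n. h u w * q i w)) = (\<Sum>u<n. mu i * (q i u * q i u))"
      using qev i by (intro sum.cong, auto)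
    also have "\<dots> = mu i" using qon i by (simp add: sum_distrib_left[symmetric])
    finally have "mu i = (\<Sum>u<n. q i u * (q i u - (\<Sum>w<n. adj E u w * q i w / sqrt (d u * d w))))"
      using Hx by simp
    also have "\<dots> \<ge> 0"
      by (rule psd, insert asym a0 dsum dpos, auto)
    finally show "mu i \<ge> 0" .
  qed

  have finM0: "finite M0"
    by (rule finite_subset[of _ "{..<n} \<times> {..<n}"], insert M0, auto)
  have M0D: "p \<in> M0 \<Longrightarrow> fst p < n \<and> snd p < n \<and> fst p \<noteq> snd p" for p using M0 by auto
  define F where "F u v x = (if x = u then sqrt (d v) else 0) - (if x = v then sqrt (d u) else 0)" for u v x
  have Fd: "(\<Sum>x<n. F u v x * \<phi> x) = sqrt (d v) * \<phi> u - sqrt (d u) * \<phi> v"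
    if "u < n" "v < n" "u \<noteq> v" for u v \<phi> unfolding F_def by (rule Fdot[OF that])
  define c where "c p i = (\<Sum>x<n. q i x * F (fst p) (snd p) x)" for p i
  have cval: "c p i = sqrt (d (snd p)) * q i (fst p) - sqrt (d (fst p)) * q i (snd p)"
    if p: "p \<in> M0" for p i
    unfolding c_def using Fd[of "fst p" "snd p" "q i"] M0D[OF p] by (simp add: mult.commute)
  define wt where "wt i = (\<Sum>p\<in>M0. (c p i)^2) / (4 * m)" for i
  have wt0: "wt 0 = 0"
  proof -
    have "c p 0 = 0" if p: "p \<in> M0" for p
      unfolding cval[OF p] using q0 M0D[OF p] unfolding psi_def by simp
    thus ?thesis unfolding wt_def by simp
  qed
  have dnn: "\<And>u. u < n \<Longrightarrow> d u \<ge> 0" using dpos by (simp add: less_imp_le)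
  have wt01: "\<forall>i<n. 0 \<le> wt i \<and> wt i \<le> 1"
  proof (intro allI impI conjI)
    fix i assume i: "i < n"
    show "0 \<le> wt i" unfolding wt_def using mpos by (intro divide_nonneg_pos sum_nonneg, auto)
    define e where "e u v = (sqrt (d v) * q i u - sqrt (d u) * q i v)^2" for u v
    have "(\<Sum>p\<in>M0. (c p i)^2) = (\<Sum>p\<in>M0. e (fst p) (snd p))"
      unfolding e_def by (rule sum.cong, auto simp: cval)
    also have "\<dots> \<le> (\<Sum>p\<in>{..<n} \<times> {..<n}. e (fst p) (snd p))"
      by (rule sum_mono2, insert M0, auto simp: e_def)
    also have "\<dots> = (\<Sum>u<n. \<Sum>v<n. e u v)" by (simp add: sum.cartesian_product split_def)
    also have "\<dots> = (\<Sum>u<n. \<Sum>v<n. d v * (q i u)^2 + d u * (q i v)^2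
                     - 2 * ((sqrt (d u) * q i u) * (sqrt (d v) * q i v)))"
      unfolding e_def by (intro sum.cong refl, auto simp: power2_diff power_mult_distrib dnn mult_ac)
    also have "\<dots> = (\<Sum>u<n. \<Sum>v<n. d v * (q i u)^2) + (\<Sum>u<n. \<Sum>v<n. d u * (q i v)^2)
                     - 2 * (\<Sum>u<n. \<Sum>v<n. (sqrt (d u) * q i u) * (sqrt (d v) * q i v))"
      by (simp add: sum_subtractf sum.distrib sum_distrib_left)
    also have "(\<Sum>u<n. \<Sum>v<n. d v * (q i u)^2) = (\<Sum>u<n. (q i u)^2) * (\<Sum>v<n. d v)"
      unfolding sum_product by (intro sum.cong refl) (simp add: mult.commute)
    also have "(\<Sum>u<n. \<Sum>v<n. d u * (q i v)^2) = (\<Sum>u<n. d u) * (\<Sum>v<n. (q i v)^2)"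
      unfolding sum_product ..
    also have "(\<Sum>u<n. \<Sum>v<n. (sqrt (d u) * q i u) * (sqrt (d v) * q i v))
       = (\<Sum>u<n. sqrt (d u) * q i u) * (\<Sum>v<n. sqrt (d v) * q i v)"
      unfolding sum_product ..
    also have "(\<Sum>u<n. (q i u)^2) = 1" using qon i by (simp add: power2_eq_square)
    also have "(\<Sum>u<n. sqrt (d u) * q i u) * (\<Sum>v<n. sqrt (d v) * q i v) \<ge> 0" by simp
    hence "1 * (\<Sum>v<n. d v) + (\<Sum>u<n. d u) * 1
                     - 2 * ((\<Sum>u<n. sqrt (d u) * q i u) * (\<Sum>v<n. sqrt (d v) * q i v)) \<le> 4 * m"
      unfolding hs by simp
    finally show "wt i \<le> 1" unfolding wt_def using mpos by simp
  qed
  have csq: "(\<Sum>i<n. (c p i)^2) = d (fst p) + d (snd p)" if p: "p \<in> M0" for p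
  proof -
    obtain u v where uv: "p = (u, v)" by (cases p)
    have u: "u < n" "v < n" "u \<noteq> v" using M0D[OF p] uv by auto
    have "(\<Sum>i<n. (c p i)^2) = (\<Sum>x<n. F u v x * F u v x)"
      unfolding parseval[OF comp, of "F u v" "F u v"] c_def uv by (simp add: power2_eq_square)
    also have "\<dots> = d u + d v" unfolding Fd[OF u] unfolding F_def using u dnn by simp
    finally show ?thesis using uv by simp
  qed
  have wsum: "(\<Sum>i<n. wt i) \<ge> real (k - 1)"
  proof -
    have "(\<Sum>i<n. wt i) = (\<Sum>p\<in>M0. \<Sum>i<n. (c p i)^2) / (4 * m)"
      unfolding wt_def sum_divide_distrib[symmetric] by (subst sum.swap, simp)
    also have "(\<Sum>p\<in>M0. \<Sum>i<n. (c p i)^2) = (\<Sum>(u, v)\<in>M0. real (deg n E u) + real (deg n E v))"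
      by (rule sum.cong, auto simp: csq d_def)
    finally have "(\<Sum>i<n. wt i) = (\<Sum>(u, v)\<in>M0. real (deg n E u) + real (deg n E v)) / (4 * m)" .
    moreover have "4 * (real k - 1) * m / (4 * m) = real (k - 1)" using mpos k1 by (simp add: of_nat_diff)
    ultimately show ?thesis using Mbig mpos unfolding m_def[symmetric]
      by (metis divide_right_mono less_imp_le mult_pos_pos zero_less_numeral)
  qed

  define g where "g u v x = adj E x v * sqrt (d u / d v) - adj E x u * sqrt (d v / d u)" for u v x
  have HF: "(\<Sum>w<n. h x w * F u v w) = F u v x + g u v x / sqrt (d x)"
    if uv: "u < n" "v < n" "u \<noteq> v" and x: "x < n" for u v x
  proof -
    have "(\<Sum>w<n. adj E x w * F u v w / sqrt (d x * d w))
        = (\<Sum>w<n. F u v w * (adj E x w / sqrt (d x * d w)))"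
      by (rule sum.cong, auto)
    also have "\<dots> = sqrt (d v) * (adj E x u / sqrt (d x * d u)) - sqrt (d u) * (adj E x v / sqrt (d x * d v))"
      by (rule Fd[OF uv])
    also have "\<dots> = - g u v x / sqrt (d x)"
    proof -
      have p: "d u > 0" "d v > 0" "d x > 0" using dpos uv x by auto
      hence "sqrt (d u) > 0" "sqrt (d v) > 0" "sqrt (d x) > 0" by auto
      thus ?thesis unfolding g_def using p by (simp add: real_sqrt_mult real_sqrt_divide field_simps)
    qed
    finally show ?thesis using Hx[OF x] by simp
  qed
  have FF: "(\<Sum>x<n. F u v x * F u v x) = d u + d v" if uv: "u < n" "v < n" "u \<noteq> v" for u v
    unfolding Fd[OF uv] unfolding F_def using uv dnn by simp
  have FG: "(\<Sum>x<n. F u v x * (g u v x / sqrt (d x))) = 2 * adj E u v"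
    if uv: "u < n" "v < n" "u \<noteq> v" for u v
  proof -
    have p: "d u > 0" "d v > 0" using dpos uv by auto
    hence sp: "sqrt (d u) > 0" "sqrt (d v) > 0" by auto
    have "(\<Sum>x<n. F u v x * (g u v x / sqrt (d x)))
        = sqrt (d v) * (g u v u / sqrt (d u)) - sqrt (d u) * (g u v v / sqrt (d v))"
      by (rule Fd[OF uv])
    also have "g u v u = adj E u v * (sqrt (d u) / sqrt (d v))" unfolding g_def aii
      by (simp add: real_sqrt_divide)
    also have "g u v v = - adj E u v * (sqrt (d v) / sqrt (d u))" unfolding g_def aii
      using asym[of v u] by (simp add: real_sqrt_divide)
    finally show ?thesis using sp by (simp add: field_simps)
  qed
  have Q1: "(\<Sum>i<n. mu i * (c p i)^2) = d (fst p) + d (snd p) + 2 * adj E (fst p) (snd p)"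
    if p: "p \<in> M0" for p
  proof -
    obtain u v where pv: "p = (u, v)" by (cases p)
    have uv: "u < n" "v < n" "u \<noteq> v" using M0D[OF p] pv by auto
    have "(\<Sum>i<n. mu i * (c p i)^2) = (\<Sum>x<n. F u v x * (\<Sum>w<n. h x w * F u v w))"
      unfolding quad_forms(1)[OF hsym qon qev, of "F u v"] c_def pv by simp
    also have "\<dots> = (\<Sum>x<n. F u v x * F u v x + F u v x * (g u v x / sqrt (d x)))"
      by (rule sum.cong, auto simp: HF[OF uv] distrib_left)
    also have "\<dots> = d u + d v + 2 * adj E u v" unfolding sum.distrib FF[OF uv] FG[OF uv] ..
    finally show ?thesis using pv by simp
  qed
  have Q2: "(\<Sum>i<n. (mu i)^2 * (c p i)^2) = d (fst p) + d (snd p) + 4 * adj E (fst p) (snd p)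
     + (\<Sum>x<n. 1 / d x * (g (fst p) (snd p) x)^2)"
    if p: "p \<in> M0" for p
  proof -
    obtain u v where pv: "p = (u, v)" by (cases p)
    have uv: "u < n" "v < n" "u \<noteq> v" using M0D[OF p] pv by auto
    have "(\<Sum>i<n. (mu i)^2 * (c p i)^2) = (\<Sum>x<n. (\<Sum>w<n. h x w * F u v w)^2)"
      unfolding quad_forms(2)[OF hsym qon qev, of "F u v"] c_def pv by simp
    also have "\<dots> = (\<Sum>x<n. F u v x * F u v x + 2 * (F u v x * (g u v x / sqrt (d x)))
         + 1 / d x * (g u v x)^2)"
    proof (rule sum.cong[OF refl])
      fix x assume x: "x \<in> {..<n}"
      have xn: "x < n" using x by simp
      have dx: "d x > 0" using dpos x by auto
      have "(g u v x / sqrt (d x))^2 = 1 / d x * (g u v x)^2"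
        using dx by (simp add: power_divide)
      then show "(\<Sum>w<n. h x w * F u v w)^2 = F u v x * F u v x + 2 * (F u v x * (g u v x / sqrt (d x)))
         + 1 / d x * (g u v x)^2"
        unfolding HF[OF uv xn] power2_sum using dx by (simp add: power2_eq_square abs_of_pos)
    qed
    also have "\<dots> = d u + d v + 4 * adj E u v + (\<Sum>x<n. 1 / d x * (g u v x)^2)"
      unfolding sum.distrib FF[OF uv] sum_distrib_left[symmetric] FG[OF uv] by simp
    finally show ?thesis using pv by simp
  qed
  have n1: "n \<ge> 1" using n2 by simp
  have sw: "(\<Sum>i<n. f (mu i) * wt i) = (\<Sum>p\<in>M0. \<Sum>i<n. f (mu i) * (c p i)^2) / (4 * m)" for f
    unfolding wt_def sum_divide_distrib[symmetric] sum_distrib_left times_divide_eq_right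
    by (subst sum.swap, simp)
  have I1: "(\<Sum>j=1..k-1. sort (map mu [0..<n]) ! j) \<le> (\<Sum>i<n. mu i * wt i)"
    using main_ineq[OF n1 mu0 munn wt0 wt01 wsum, of "\<lambda>x. x"] by simp
  have I2: "(\<Sum>j=1..k-1. (sort (map mu [0..<n]) ! j)^2) \<le> (\<Sum>i<n. (mu i)^2 * wt i)"
    using main_ineq[OF n1 mu0 munn wt0 wt01 wsum, of "\<lambda>x. x^2"] by (simp add: power_mono)
  have E1: "(\<Sum>i<n. mu i * wt i) = 1 / (4 * real (num_edges n E)) *
             (\<Sum>(u, v)\<in>M0. real (deg n E u) + real (deg n E v) + 2 * adj E u v)"
  proof -
    have "(\<Sum>p\<in>M0. \<Sum>i<n. mu i * (c p i)^2) = (\<Sum>(u, v)\<in>M0. real (deg n E u) + real (deg n E v) + 2 * adj E u v)"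
      by (rule sum.cong, auto simp: Q1 d_def)
    then show ?thesis using sw[of "\<lambda>x. x"] unfolding m_def by simp
  qed
  have E2: "(\<Sum>i<n. (mu i)^2 * wt i) = 1 / (4 * real (num_edges n E)) *
             (\<Sum>(u, v)\<in>M0. real (deg n E u) + real (deg n E v) + 4 * adj E u v
                + (\<Sum>x<n. 1 / real (deg n E x) *
                     (adj E x v * sqrt (real (deg n E u) / real (deg n E v))
                      - adj E x u * sqrt (real (deg n E v) / real (deg n E u)))^2))"
  proof -
    have "(\<Sum>p\<in>M0. \<Sum>i<n. (mu i)^2 * (c p i)^2) = (\<Sum>(u, v)\<in>M0. real (deg n E u) + real (deg n E v) + 4 * adj E u v
                + (\<Sum>x<n. 1 / real (deg n E x) *
                     (adj E x v * sqrt (real (deg n E u) / real (deg n E v))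
                      - adj E x u * sqrt (real (deg n E v) / real (deg n E u)))^2))"
      by (rule sum.cong, auto simp: Q2 d_def g_def)
    then show ?thesis using sw[of "\<lambda>x. x^2"] unfolding m_def by simp
  qed
  show ?thesis using I1 I2 E1 E2 unfolding esort by simp
qed


end
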